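(* Let $\mathsf G=(A,B,C,D)$ with $\rho(A)<1$. Then $\|\mathcal M_\infty(\mathsf G)\|_{\mathrm{op}}=\|\mathsf G\|_{\mathcal H_2^{\mathrm{op}}}$.
   Context: $\mathcal M_k(\mathsf G):=[D|CB|CAB|\dots|CA^{k-2}B]$ and $\|\mathcal M_\infty(\mathsf G)\|_{\mathrm{op}}:=\lim_{k\to\infty}\|\mathcal M_k(\mathsf G)\|_{\mathrm{op}}$. The transfer function is $\mathsf G(z)=C(zI-A)^{-1}B+D\in\mathbb C^{m\times p}$ and $\|\mathsf G\|_{\mathcal H_2^{\mathrm{op}}}:=\max_{v\in\mathbb R^m,\|v\|_2=1}\sqrt{\frac1{2\pi}\int_0^{2\pi}\|v^\top\mathsf G(e^{i\theta})\|_2^2d\theta}$. *)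

theory Defs
  imports "HOL-Analysis.Analysis"
begin

definition cmat :: "real^'c^'r \<Rightarrow> complex^'c^'r" where
  "cmat M = (\<chi> i j. complex_of_real (M $ i $ j))"

primrec mpow :: "real^'n^'n \<Rightarrow> nat \<Rightarrow> real^'n^'n" where
  "mpow M 0 = mat 1"
| "mpow M (Suc k) = M ** mpow M k"

definition is_eigenvalue :: "real^'n^'n \<Rightarrow> complex \<Rightarrow> bool" where
  "is_eigenvalue M l \<longleftrightarrow> (\<exists>x::complex^'n. x \<noteq> 0 \<and> cmat M *v x = l *s x)"

definition spectral_radius :: "real^'n^'n \<Rightarrow> real" where
  "spectral_radius M = Sup {cmod l | l. is_eigenvalue M l}"

text \<open>Block matrix M_k = [D | CB | CAB | ... | CA^(k-2)B] acting on the block vector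
  (x 0, ..., x (k-1)) (each block in R^p): block 0 is D, block j (1 <= j < k) is C A^(j-1) B.\<close>
definition Mk_apply :: "real^'n^'n \<Rightarrow> real^'p^'n \<Rightarrow> real^'n^'m \<Rightarrow> real^'p^'m
    \<Rightarrow> nat \<Rightarrow> (nat \<Rightarrow> real^'p) \<Rightarrow> real^'m" where
  "Mk_apply A B C D k x =
     (if k = 0 then 0 else D *v x 0 + (\<Sum>j\<in>{1..<k}. (C ** mpow A (j - 1) ** B) *v x j))"

text \<open>Euclidean operator norm (largest singular value) of M_k : R^(kp) \<rightarrow> R^m,
  where R^(kp) carries the Euclidean norm of the stacked blocks.\<close>
definition Mk_opnorm :: "real^'n^'n \<Rightarrow> real^'p^'n \<Rightarrow> real^'n^'m \<Rightarrow> real^'p^'m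
    \<Rightarrow> nat \<Rightarrow> real" where
  "Mk_opnorm A B C D k =
     (SUP x \<in> {x. (\<Sum>j<k. (norm (x j))\<^sup>2) \<le> 1}. norm (Mk_apply A B C D k x))"

definition transfer :: "real^'n^'n \<Rightarrow> real^'p^'n \<Rightarrow> real^'n^'m \<Rightarrow> real^'p^'m
    \<Rightarrow> complex \<Rightarrow> complex^'p^'m" where
  "transfer A B C D z = cmat C ** matrix_inv (mat z - cmat A) ** cmat B + cmat D"

definition H2op_norm :: "real^'n^'n \<Rightarrow> real^'p^'n \<Rightarrow> real^'n^'m \<Rightarrow> real^'p^'m \<Rightarrow> real" where
  "H2op_norm A B C D =
     (SUP v \<in> {v::real^'m. norm v = 1}.
        sqrt (1 / (2 * pi) * integral {0..2 * pi}
          (\<lambda>\<theta>. (norm ((\<chi> i. complex_of_real (v $ i)) v* transfer A B C D (cis \<theta>)))\<^sup>2)))"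

end

theory Submission
  imports Defs "Jordan_Normal_Form.Spectral_Radius"
begin

no_notation Matrix.vec_index (infixl "$" 100)
no_notation Matrix.scalar_prod (infix "\<bullet>" 70)

lemma cmod_mv_bound:
  fixes M :: "complex^'n^'m" and x :: "complex^'n"
  shows "norm (M *v x) \<le> (\<Sum>i\<in>UNIV. \<Sum>j\<in>UNIV. cmod (M $ i $ j)) * norm x"
proof -
  have "norm (M *v x) \<le> (\<Sum>i\<in>UNIV. norm ((M *v x) $ i))"
    unfolding norm_vec_def by (rule L2_set_le_sum) simp
  also have "\<dots> \<le> (\<Sum>i\<in>UNIV. (\<Sum>j\<in>UNIV. cmod (M $ i $ j)) * norm x)"
  proof (rule sum_mono)
    fix i
    have "norm ((M *v x) $ i) = norm (\<Sum>j\<in>UNIV. M $ i $ j * x $ j)"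
      by (simp add: matrix_vector_mult_def)
    also have "\<dots> \<le> (\<Sum>j\<in>UNIV. norm (M $ i $ j * x $ j))" by (rule norm_sum)
    also have "\<dots> \<le> (\<Sum>j\<in>UNIV. cmod (M $ i $ j) * norm x)"
      by (rule sum_mono) (simp only: norm_mult, rule mult_left_mono[OF Finite_Cartesian_Product.norm_nth_le], simp)
    finally show "norm ((M *v x) $ i) \<le> (\<Sum>j\<in>UNIV. cmod (M $ i $ j)) * norm x"
      by (simp add: sum_distrib_right)
  qed
  finally show ?thesis by (simp add: sum_distrib_right)
qed

lemma eig_bound:
  fixes A :: "real^'n^'n"
  assumes "is_eigenvalue A l"
  shows "cmod l \<le> (\<Sum>i\<in>UNIV. \<Sum>j\<in>UNIV. cmod (cmat A $ i $ j))"
proof -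
  obtain x :: "complex^'n" where x: "x \<noteq> 0" "cmat A *v x = l *s x"
    using assms unfolding is_eigenvalue_def by blast
  have "cmod l * norm x = norm (cmat A *v x)" using x(2)
    by (simp add: norm_vec_def L2_set_def norm_mult power_mult_distrib
        sum_distrib_left[symmetric] real_sqrt_mult)
  also have "\<dots> \<le> (\<Sum>i\<in>UNIV. \<Sum>j\<in>UNIV. cmod (cmat A $ i $ j)) * norm x"
    by (rule cmod_mv_bound)
  finally show ?thesis using x(1) by simp
qed

lemma mpow_commute0: "mpow M k ** M = M ** mpow M k"
proof (induction k)
  case 0 then show ?case by (simp add: matrix_mul_lid matrix_mul_rid)
next
  case (Suc k) then show ?case by (metis mpow.simps(2) matrix_mul_assoc)
qed

lemma decay:
  fixes A :: "real^'n^'n"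
  assumes sr: "Defs.spectral_radius A < 1"
  shows "\<exists>c q. 0 < q \<and> q < 1 \<and> (\<forall>j a b. \<bar>mpow A j $ a $ b\<bar> \<le> c * q^j)"
proof -
  define \<rho> where "\<rho> = Defs.spectral_radius A"
  have bdd: "bdd_above {cmod l | l. is_eigenvalue A l}"
    by (rule bdd_aboveI[where M="\<Sum>i\<in>UNIV. \<Sum>j\<in>UNIV. cmod (cmat A $ i $ j)"]) (auto intro: eig_bound)
  have eig_le: "cmod l \<le> \<rho>" if "is_eigenvalue A l" for l
    unfolding \<rho>_def Defs.spectral_radius_def by (rule cSup_upper) (use that bdd in auto)
  define \<rho>p where "\<rho>p = max \<rho> 0"
  have \<rho>p1: "\<rho>p < 1" "0 \<le> \<rho>p" using sr unfolding \<rho>p_def \<rho>_def by auto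
  define r where "r = 2 / (1 + \<rho>p)"
  have r1: "1 < r" using \<rho>p1 unfolding r_def by (simp add: field_simps)
  have r\<rho>: "r * \<rho>p < 1" using \<rho>p1 unfolding r_def by (simp add: field_simps)
  define N where "N = CARD('n)"
  obtain f where bij: "bij_betw f {0..<N} (UNIV::'n set)"
    using ex_bij_betw_nat_finite[of "UNIV::'n set"] unfolding N_def by auto
  define g where "g = the_inv_into {0..<N} f"
  have fg: "f (g a) = a" for a unfolding g_def by (rule f_the_inv_into_f_bij_betw[OF bij]) auto
  have gf: "g (f i) = i" if "i < N" for i
    unfolding g_def using bij that by (auto simp: bij_betw_def the_inv_into_f_f)
  have gN: "g a < N" for a
    unfolding g_def using bij by (metis atLeastLessThan_iff bij_betw_def the_inv_into_into subset_refl UNIV_I image_eqI fg)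
  have finj: "f i = f j \<longleftrightarrow> i = j" if "i < N" "j < N" for i j
    using gf that by metis
  have reidx: "(\<Sum>t\<in>{0..<N}. h (f t)) = (\<Sum>c\<in>UNIV. h c)" for h :: "'n \<Rightarrow> complex"
    by (rule sum.reindex_bij_betw[OF bij])
  have N0: "0 < N" unfolding N_def by simp
  define JA where "JA = Matrix.mat N N (\<lambda>(i,j). complex_of_real r * complex_of_real (A $ f i $ f j))"
  have JA: "JA \<in> carrier_mat N N" unfolding JA_def by simp
  have pow: "JA ^\<^sub>m k = Matrix.mat N N (\<lambda>(i,j). complex_of_real r ^ k * complex_of_real (mpow A k $ f i $ f j))" for k
  proof (induction k)
    case 0
    show ?case
      by (rule eq_matI) (auto simp: JA_def Finite_Cartesian_Product.mat_def finj)
  next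
    case (Suc k)
    show ?case
    proof (rule eq_matI)
      fix i j assume ij: "i < dim_row (Matrix.mat N N (\<lambda>(i,j). complex_of_real r ^ Suc k * complex_of_real (mpow A (Suc k) $ f i $ f j)))"
         "j < dim_col (Matrix.mat N N (\<lambda>(i,j). complex_of_real r ^ Suc k * complex_of_real (mpow A (Suc k) $ f i $ f j)))"
      then have i: "i < N" and j: "j < N" by auto
      have "(JA ^\<^sub>m Suc k) $$ (i, j) = (JA ^\<^sub>m k * JA) $$ (i, j)" by simp
      also have "\<dots> = (\<Sum>t\<in>{0..<N}. (complex_of_real r ^ k * complex_of_real (mpow A k $ f i $ f t)) *
                         (complex_of_real r * complex_of_real (A $ f t $ f j)))"
        using i j JA unfolding Suc.IH by (simp add: scalar_prod_def JA_def)
      also have "\<dots> = complex_of_real r ^ Suc k * (\<Sum>t\<in>{0..<N}. complex_of_real (mpow A k $ f i $ f t) * complex_of_real (A $ f t $ f j))"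
        by (simp add: sum_distrib_left mult_ac)
      also have "(\<Sum>t\<in>{0..<N}. complex_of_real (mpow A k $ f i $ f t) * complex_of_real (A $ f t $ f j))
          = (\<Sum>c\<in>UNIV. complex_of_real (mpow A k $ f i $ c) * complex_of_real (A $ c $ f j))"
        by (rule reidx)
      also have "\<dots> = complex_of_real ((mpow A k ** A) $ f i $ f j)"
        by (simp add: matrix_matrix_mult_def)
      also have "mpow A k ** A = mpow A (Suc k)" by (simp add: mpow_commute0)
      finally show "(JA ^\<^sub>m Suc k) $$ (i, j) = Matrix.mat N N (\<lambda>(i,j). complex_of_real r ^ Suc k * complex_of_real (mpow A (Suc k) $ f i $ f j)) $$ (i, j)"
        using i j by simp
    qed (use JA in auto)
  qed
  have srJ: "Spectral_Radius.spectral_radius JA < 1"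
  proof -
    obtain ev where ev: "ev \<in> spectrum JA" "Spectral_Radius.spectral_radius JA = cmod ev"
      using spectral_radius_mem_max(1)[OF JA N0] by auto
    then obtain v where v: "v \<in> carrier_vec N" "v \<noteq> 0\<^sub>v N" "JA *\<^sub>v v = ev \<cdot>\<^sub>v v"
      unfolding spectrum_def eigenvalue_def eigenvector_def using JA by auto
    obtain i0 where i0: "i0 < N" "vec_index v i0 \<noteq> 0"
    proof -
      have "\<exists>i<N. vec_index v i \<noteq> 0"
      proof (rule ccontr)
        assume "\<not> (\<exists>i<N. vec_index v i \<noteq> 0)"
        then have "v = 0\<^sub>v N" using v(1) by (intro eq_vecI) auto
        with v(2) show False by simp
      qed
      then show ?thesis using that by blast
    qed
    define x where "x = (\<chi> a. vec_index v (g a))"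
    have x0: "x \<noteq> 0"
    proof
      assume "x = 0"
      then have "x $ f i0 = 0" by simp
      then show False using i0 gf[OF i0(1)] unfolding x_def by simp
    qed
    have r0: "complex_of_real r \<noteq> 0" using r1 by simp
    have "cmat A *v x = (ev / complex_of_real r) *s x"
    proof (rule Finite_Cartesian_Product.vec_eq_iff[THEN iffD2], rule allI)
      fix a
      define i where "i = g a"
      have i: "i < N" "f i = a" unfolding i_def using gN fg by auto
      have "vec_index (JA *\<^sub>v v) i = vec_index (ev \<cdot>\<^sub>v v) i" using v(3) by simp
      then have "(\<Sum>t\<in>{0..<N}. complex_of_real r * complex_of_real (A $ f i $ f t) * vec_index v t) = ev * vec_index v i"
        using i v(1) JA by (simp add: scalar_prod_def JA_def)
      moreover have "(\<Sum>t\<in>{0..<N}. complex_of_real r * complex_of_real (A $ f i $ f t) * vec_index v t)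
          = complex_of_real r * (\<Sum>t\<in>{0..<N}. complex_of_real (A $ f i $ f t) * x $ f t)"
        by (simp add: sum_distrib_left mult_ac x_def gf)
      moreover have "(\<Sum>t\<in>{0..<N}. complex_of_real (A $ f i $ f t) * x $ f t) = (cmat A *v x) $ a"
      proof -
        have "(\<Sum>t\<in>{0..<N}. complex_of_real (A $ f i $ f t) * x $ f t) = (\<Sum>c\<in>UNIV. complex_of_real (A $ f i $ c) * x $ c)"
          by (rule reidx)
        then show ?thesis by (simp add: matrix_vector_mult_def cmat_def i)
      qed
      ultimately have "complex_of_real r * (cmat A *v x) $ a = ev * x $ a"
        by (simp add: x_def i_def)
      then show "(cmat A *v x) $ a = ((ev / complex_of_real r) *s x) $ a"
        using r0 by (simp add: field_simps)
    qed
    then have "is_eigenvalue A (ev / complex_of_real r)" unfolding is_eigenvalue_def using x0 by blast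
    then have "cmod (ev / complex_of_real r) \<le> \<rho>p" using eig_le \<rho>p_def by fastforce
    then have "cmod ev \<le> r * \<rho>p" using r1 by (simp add: norm_divide field_simps)
    then show ?thesis using ev(2) r\<rho> by simp
  qed
  obtain cc where cc: "\<And>k. norm_bound (JA ^\<^sub>m k) cc"
    using spectral_radius_jnf_norm_bound_less_1_upper_triangular[OF JA srJ] by blast
  have "\<bar>mpow A j $ a $ b\<bar> \<le> cc * (1 / r)^j" for j a b
  proof -
    have "cmod ((JA ^\<^sub>m j) $$ (g a, g b)) \<le> cc"
      using cc[of j] JA gN unfolding norm_bound_def by auto
    then have "cmod (complex_of_real r ^ j * complex_of_real (mpow A j $ a $ b)) \<le> cc"
      unfolding pow using gN fg by simp
    then have "r ^ j * \<bar>mpow A j $ a $ b\<bar> \<le> cc" using r1 by (simp add: norm_mult norm_power)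
    then show ?thesis using r1 by (simp add: field_simps power_divide)
  qed
  moreover have "0 < 1 / r" "1 / r < 1" using r1 by auto
  ultimately show ?thesis by blast
qed

lemma cos_int_integral:
  fixes m :: int
  shows "((\<lambda>t. cos (of_int m * t)) has_integral (if m = 0 then 2 * pi else 0)) {0..2*pi}"
proof (cases "m = 0")
  case True
  then show ?thesis using has_integral_const_real[of "1::real" "0::real" "2*pi"] by simp
next
  case False
  have "((\<lambda>t. cos (of_int m * t)) has_integral
          (sin (of_int m * (2*pi)) / of_int m - sin (of_int m * 0) / of_int m)) {0..2*pi}"
  proof (rule fundamental_theorem_of_calculus)
    show "0 \<le> 2 * pi" by simp
    fix x :: real
    show "((\<lambda>t. sin (of_int m * t) / of_int m) has_vector_derivative cos (of_int m * x))
            (at x within {0..2*pi})"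
      using False
      by (auto intro!: derivative_eq_intros simp: has_real_derivative_iff_has_vector_derivative[symmetric])
  qed
  moreover have "sin (of_int m * (2*pi)) = 0"
  proof -
    have "of_int m * (2*pi) = (2 * of_int m) * pi" by simp
    moreover have "sin ((2 * of_int m) * pi) = 0"
      by (subst sin_times_pi_eq_0) simp
    ultimately show ?thesis by metis
  qed
  ultimately show ?thesis using False by simp
qed

lemma cos_diff_integral:
  fixes j k :: nat
  shows "((\<lambda>t. cos ((real j - real k) * t)) has_integral (if j = k then 2 * pi else 0)) {0..2*pi}"
  using cos_int_integral[of "int j - int k"] by simp

lemma trig_poly_sq:
  fixes c :: "nat \<Rightarrow> real"
  shows "(cmod (\<Sum>j<N. cis (-(real j * t)) * complex_of_real (c j)))^2
       = (\<Sum>j<N. \<Sum>k<N. c j * c k * cos ((real j - real k) * t))"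
proof -
  define U where "U = (\<Sum>j<N. cis (-(real j * t)) * complex_of_real (c j))"
  have "(cmod U)^2 = Re (U * cnj U)"
    by (metis Re_complex_of_real complex_norm_square)
  also have "U * cnj U = (\<Sum>j<N. \<Sum>k<N. (cis (-(real j * t)) * complex_of_real (c j)) *
                (cis (real k * t) * complex_of_real (c k)))"
    unfolding U_def by (simp add: cnj_sum cis_cnj sum_product)
  also have "Re \<dots> = (\<Sum>j<N. \<Sum>k<N. c j * c k * cos ((real j - real k) * t))"
  proof -
    have "\<And>j k. Re ((cis (-(real j * t)) * complex_of_real (c j)) *
                (cis (real k * t) * complex_of_real (c k))) = c j * c k * cos ((real j - real k) * t)"
    proof -
      fix j k
      have e: "cis (-(real j * t)) * cis (real k * t) = cis (-(real j * t) + real k * t)"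
        by (rule cis_mult)
      have "(cis (-(real j * t)) * complex_of_real (c j)) * (cis (real k * t) * complex_of_real (c k))
          = complex_of_real (c j * c k) * (cis (-(real j * t)) * cis (real k * t))"
        by (simp add: mult_ac)
      also have "\<dots> = complex_of_real (c j * c k) * cis (-(real j * t) + real k * t)"
        by (simp only: e)
      finally have "(cis (-(real j * t)) * complex_of_real (c j)) * (cis (real k * t) * complex_of_real (c k))
          = complex_of_real (c j * c k) * cis (-(real j * t) + real k * t)" .
      moreover have "cos (-(real j * t) + real k * t) = cos ((real j - real k) * t)"
        by (metis cos_minus minus_diff_eq left_diff_distrib add.commute diff_conv_add_uminus)
      ultimately show "Re ((cis (-(real j * t)) * complex_of_real (c j)) *
                (cis (real k * t) * complex_of_real (c k))) = c j * c k * cos ((real j - real k) * t)"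
        by (metis rcis_def Re_rcis)
    qed
    then show ?thesis by (simp add: Re_sum)
  qed
  finally show ?thesis unfolding U_def .
qed

lemma trig_poly_integral:
  fixes c :: "nat \<Rightarrow> real"
  shows "((\<lambda>t. (cmod (\<Sum>j<N. cis (-(real j * t)) * complex_of_real (c j)))^2)
          has_integral (2 * pi * (\<Sum>j<N. (c j)^2))) {0..2*pi}"
proof -
  have "((\<lambda>t. \<Sum>j<N. \<Sum>k<N. c j * c k * cos ((real j - real k) * t)) has_integral
         (\<Sum>j<N. \<Sum>k<N. c j * c k * (if j = k then 2 * pi else 0))) {0..2*pi}"
    by (intro has_integral_sum finite_lessThan has_integral_mult_right cos_diff_integral)
  moreover have "(\<Sum>j<N. \<Sum>k<N. c j * c k * (if j = k then 2 * pi else 0)) = 2 * pi * (\<Sum>j<N. (c j)^2)"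
  proof -
    have "\<And>j. j < N \<Longrightarrow> (\<Sum>k<N. c j * c k * (if j = k then 2 * pi else 0)) = 2 * pi * (c j)^2"
    proof -
      fix j assume "j < N"
      have "(\<Sum>k<N. c j * c k * (if j = k then 2 * pi else 0)) = (\<Sum>k<N. if j = k then c j * c k * (2 * pi) else 0)"
        by (rule sum.cong) auto
      also have "\<dots> = c j * c j * (2 * pi)" using \<open>j < N\<close> by (simp add: sum.delta)
      finally show "(\<Sum>k<N. c j * c k * (if j = k then 2 * pi else 0)) = 2 * pi * (c j)^2"
        by (simp add: power2_eq_square)
    qed
    then show ?thesis by (simp add: sum_distrib_left)
  qed
  ultimately show ?thesis by (simp add: trig_poly_sq)
qed

lemma parseval:
  fixes c :: "nat \<Rightarrow> real" and u :: "real \<Rightarrow> complex"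
  assumes q: "0 \<le> q" "q < 1" and cb: "\<And>j. \<bar>c j\<bar> \<le> K * q^j"
    and us: "\<And>t. (\<lambda>j. cis (-(real j * t)) * complex_of_real (c j)) sums u t"
  shows "((\<lambda>t. (cmod (u t))^2) has_integral (2 * pi * (\<Sum>j. (c j)^2))) {0..2*pi}"
proof -
  define F where "F = (\<lambda>N t. (cmod (\<Sum>j<N. cis (-(real j * t)) * complex_of_real (c j)))^2)"
  have K0: "0 \<le> K" using cb[of 0] by simp
  have geo: "(\<lambda>j. K * q^j) sums (K / (1 - q))"
    using sums_mult[OF geometric_sums[of q], of K] q by (simp add: divide_simps)
  have Ub: "cmod (\<Sum>j<N. cis (-(real j * t)) * complex_of_real (c j)) \<le> K / (1 - q)" for N t
  proof -
    have "cmod (\<Sum>j<N. cis (-(real j * t)) * complex_of_real (c j)) \<le> (\<Sum>j<N. cmod (cis (-(real j * t)) * complex_of_real (c j)))"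
      by (rule norm_sum)
    also have "\<dots> = (\<Sum>j<N. \<bar>c j\<bar>)" by (simp add: norm_mult)
    also have "\<dots> \<le> (\<Sum>j<N. K * q^j)" by (intro sum_mono cb)
    also have "\<dots> \<le> K / (1 - q)"
      using sum_le_suminf[OF sums_summable[OF geo], of "{..<N}"] sums_unique[OF geo] K0 q by simp
    finally show ?thesis .
  qed
  have Fb: "norm (F N t) \<le> (K / (1 - q))^2" for N t
  proof -
    have "cmod (\<Sum>j<N. cis (-(real j * t)) * complex_of_real (c j)) \<le> K / (1 - q)" by (rule Ub)
    then show ?thesis unfolding F_def by (simp add: power_mono)
  qed
  have Fint: "(F N has_integral (2 * pi * (\<Sum>j<N. (c j)^2))) {0..2*pi}" for N
    unfolding F_def by (rule trig_poly_integral)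
  have Flim: "(\<lambda>N. F N t) \<longlonglongrightarrow> (cmod (u t))^2" for t
    unfolding F_def using us[of t] unfolding sums_def by (intro tendsto_intros)
  have dc: "(\<lambda>t. (cmod (u t))^2) integrable_on {0..2*pi} \<and>
      (\<lambda>N. integral {0..2*pi} (F N)) \<longlonglongrightarrow> integral {0..2*pi} (\<lambda>t. (cmod (u t))^2)"
    using dominated_convergence[where f=F and S="{0..2*pi}" and h="\<lambda>_. (K / (1 - q))^2" and g="\<lambda>t. (cmod (u t))^2"]
      Fint Fb Flim by (auto simp: has_integral_integrable)
  have summ: "summable (\<lambda>j. (c j)^2)"
  proof (rule summable_comparison_test')
    show "summable (\<lambda>j. K^2 * (q^2)^j)"
      using q by (intro summable_mult summable_geometric) (simp add: abs_square_less_1)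
    fix j
    have "\<bar>c j\<bar>^2 \<le> (K * q^j)^2" using cb[of j] by (intro power_mono) auto
    then show "norm ((c j)^2) \<le> K^2 * (q^2)^j" by (simp add: power_mult_distrib power_mult[symmetric] mult.commute)
  qed
  have "(\<lambda>N. integral {0..2*pi} (F N)) \<longlonglongrightarrow> 2 * pi * (\<Sum>j. (c j)^2)"
  proof -
    have "(\<lambda>N. 2 * pi * (\<Sum>j<N. (c j)^2)) \<longlonglongrightarrow> 2 * pi * (\<Sum>j. (c j)^2)"
      using summ by (intro tendsto_intros summable_LIMSEQ)
    moreover have "integral {0..2*pi} (F N) = 2 * pi * (\<Sum>j<N. (c j)^2)" for N
      using Fint[of N] by (rule integral_unique)
    ultimately show ?thesis by simp
  qed
  with dc have "integral {0..2*pi} (\<lambda>t. (cmod (u t))^2) = 2 * pi * (\<Sum>j. (c j)^2)"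
    using LIMSEQ_unique by blast
  with dc show ?thesis using integrable_integral by metis
qed

hide_const (open) Matrix.mat Matrix.vec Spectral_Radius.spectral_radius

lemma mpow_commute: "mpow M k ** M = M ** mpow M k"
proof (induction k)
  case 0 then show ?case by (simp add: matrix_mul_lid matrix_mul_rid)
next
  case (Suc k) then show ?case by (metis mpow.simps(2) matrix_mul_assoc)
qed

lemma matrix_inv_eq:
  fixes M N :: "'a::field^'n^'n"
  assumes "M ** N = mat 1"
  shows "matrix_inv M = N"
proof -
  have NM: "N ** M = mat 1" using assms matrix_left_right_inverse by blast
  let ?P = "\<lambda>X. M ** X = mat 1 \<and> X ** M = mat 1"
  have P: "?P (matrix_inv M)" unfolding matrix_inv_def by (rule someI[of ?P N]) (use assms NM in auto)
  then have "matrix_inv M = matrix_inv M ** (M ** N)" using assms by (simp add: matrix_mul_rid)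
  also have "\<dots> = (matrix_inv M ** M) ** N" by (simp add: matrix_mul_assoc)
  also have "\<dots> = N" using P by (simp add: matrix_mul_lid)
  finally show ?thesis .
qed

definition blk :: "real^'n^'n \<Rightarrow> real^'p^'n \<Rightarrow> real^'n^'m \<Rightarrow> real^'p^'m \<Rightarrow> nat \<Rightarrow> real^'p^'m" where
  "blk A B C D j = (if j = 0 then D else C ** mpow A (j - 1) ** B)"

definition rowv :: "real^'n^'n \<Rightarrow> real^'p^'n \<Rightarrow> real^'n^'m \<Rightarrow> real^'p^'m \<Rightarrow> real^'m \<Rightarrow> nat \<Rightarrow> real^'p" where
  "rowv A B C D v j = v v* blk A B C D j"

lemma norm_sq_vec: "(norm (x::'a::real_normed_vector^'n))^2 = (\<Sum>i\<in>UNIV. (norm (x$i))^2)"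
  by (simp add: norm_vec_def L2_set_def sum_nonneg)

lemma entry_le_sum2: "\<bar>M $ i $ j\<bar> \<le> (\<Sum>i\<in>UNIV. \<Sum>j\<in>UNIV. \<bar>(M::real^'a^'b) $ i $ j\<bar>)"
proof -
  have "\<bar>M $ i $ j\<bar> \<le> (\<Sum>j\<in>UNIV. \<bar>M $ i $ j\<bar>)" by (rule member_le_sum) auto
  also have "\<dots> \<le> (\<Sum>i\<in>UNIV. \<Sum>j\<in>UNIV. \<bar>M $ i $ j\<bar>)"
    by (rule member_le_sum[where f="\<lambda>i. \<Sum>j\<in>UNIV. \<bar>M $ i $ j\<bar>"]) (auto intro: sum_nonneg)
  finally show ?thesis .
qed

lemma entry_prod3:
  fixes X :: "real^'n^'m" and Y :: "real^'n^'n" and Z :: "real^'p^'n"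
  assumes Y: "\<And>a b. \<bar>Y $ a $ b\<bar> \<le> t"
  shows "\<bar>(X ** Y ** Z) $ i $ l\<bar> \<le> (\<Sum>i\<in>UNIV. \<Sum>a\<in>UNIV. \<bar>X $ i $ a\<bar>) * (\<Sum>b\<in>UNIV. \<Sum>l\<in>UNIV. \<bar>Z $ b $ l\<bar>) * t"
proof -
  have t0: "0 \<le> t" using Y[of undefined undefined] by linarith
  have "\<bar>(X ** Y ** Z) $ i $ l\<bar> = \<bar>\<Sum>b\<in>UNIV. \<Sum>a\<in>UNIV. X $ i $ a * Y $ a $ b * Z $ b $ l\<bar>"
    by (simp add: matrix_matrix_mult_def sum_distrib_right)
  also have "\<dots> \<le> (\<Sum>b\<in>UNIV. \<Sum>a\<in>UNIV. \<bar>X $ i $ a * Y $ a $ b * Z $ b $ l\<bar>)"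
    by (rule order_trans[OF sum_abs]) (intro sum_mono sum_abs)
  also have "\<dots> \<le> (\<Sum>b\<in>UNIV. \<Sum>a\<in>UNIV. \<bar>X $ i $ a\<bar> * t * \<bar>Z $ b $ l\<bar>)"
    by (intro sum_mono) (simp add: abs_mult mult_left_mono mult_right_mono Y)
  also have "\<dots> = (\<Sum>a\<in>UNIV. \<bar>X $ i $ a\<bar>) * (\<Sum>b\<in>UNIV. \<bar>Z $ b $ l\<bar>) * t"
    by (simp add: sum_distrib_left sum_distrib_right mult_ac)
  also have "\<dots> \<le> (\<Sum>i\<in>UNIV. \<Sum>a\<in>UNIV. \<bar>X $ i $ a\<bar>) * (\<Sum>b\<in>UNIV. \<Sum>l\<in>UNIV. \<bar>Z $ b $ l\<bar>) * t"
  proof -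
    have 1: "(\<Sum>a\<in>UNIV. \<bar>X $ i $ a\<bar>) \<le> (\<Sum>i\<in>UNIV. \<Sum>a\<in>UNIV. \<bar>X $ i $ a\<bar>)"
      by (rule member_le_sum[where f="\<lambda>i. \<Sum>a\<in>UNIV. \<bar>X $ i $ a\<bar>"]) (auto intro: sum_nonneg)
    have 2: "(\<Sum>b\<in>UNIV. \<bar>Z $ b $ l\<bar>) \<le> (\<Sum>b\<in>UNIV. \<Sum>l\<in>UNIV. \<bar>Z $ b $ l\<bar>)"
      by (intro sum_mono member_le_sum) auto
    show ?thesis using 1 2 t0 by (intro mult_right_mono mult_mono) (auto intro: sum_nonneg)
  qed
  finally show ?thesis .
qed

lemma vm_bound:
  fixes v :: "real^'m" and M :: "real^'p^'m"
  assumes M: "\<And>i l. \<bar>M $ i $ l\<bar> \<le> t" and v: "norm v \<le> 1"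
  shows "norm (v v* M) \<le> real CARD('m) * real CARD('p) * t"
proof -
  have t0: "0 \<le> t" using M[of undefined undefined] by linarith
  have "norm (v v* M) \<le> (\<Sum>l\<in>UNIV. \<bar>(v v* M) $ l\<bar>)" by (rule norm_le_l1_cart)
  also have "\<dots> \<le> (\<Sum>l\<in>(UNIV::'p set). real CARD('m) * t)"
  proof (rule sum_mono)
    fix l
    have "\<bar>(v v* M) $ l\<bar> = \<bar>\<Sum>i\<in>UNIV. v $ i * M $ i $ l\<bar>" by (simp add: vector_matrix_mult_def)
    also have "\<dots> \<le> (\<Sum>i\<in>UNIV. \<bar>v $ i * M $ i $ l\<bar>)" by (rule sum_abs)
    also have "\<dots> \<le> (\<Sum>i\<in>(UNIV::'m set). t)"
    proof (rule sum_mono)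
      fix i
      have "\<bar>v $ i\<bar> \<le> 1" using component_le_norm_cart[of v i] v by linarith
      then show "\<bar>v $ i * M $ i $ l\<bar> \<le> t" using M[of i l] t0
        by (simp add: abs_mult) (metis abs_ge_zero mult_le_one mult.commute mult_left_le order_trans)
    qed
    finally show "\<bar>(v v* M) $ l\<bar> \<le> real CARD('m) * t" by simp
  qed
  finally show ?thesis by (simp add: mult_ac)
qed

lemma Mk_apply_eq: "Mk_apply A B C D k x = (\<Sum>j<k. blk A B C D j *v x j)"
proof (cases "k = 0")
  case True then show ?thesis by (simp add: Mk_apply_def)
next
  case False
  then have "(\<Sum>j<k. blk A B C D j *v x j) = (\<Sum>j\<in>{0..<k}. blk A B C D j *v x j)"
    by (simp add: lessThan_atLeast0)
  also have "\<dots> = blk A B C D 0 *v x 0 + (\<Sum>j\<in>{Suc 0..<k}. blk A B C D j *v x j)"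
    using False by (subst sum.atLeast_Suc_lessThan) auto
  also have "(\<Sum>j\<in>{Suc 0..<k}. blk A B C D j *v x j) = (\<Sum>j\<in>{1..<k}. (C ** mpow A (j - 1) ** B) *v x j)"
    by (rule sum.cong) (auto simp: blk_def)
  finally show ?thesis using False by (simp add: Mk_apply_def blk_def)
qed

definition Kb :: "real^'n^'n \<Rightarrow> real^'p^'n \<Rightarrow> real^'n^'m \<Rightarrow> real^'p^'m \<Rightarrow> real \<Rightarrow> real \<Rightarrow> real" where
  "Kb A B C D c q = max (\<Sum>i\<in>UNIV. \<Sum>l\<in>UNIV. \<bar>D $ i $ l\<bar>)
     ((\<Sum>i\<in>UNIV. \<Sum>a\<in>UNIV. \<bar>C $ i $ a\<bar>) * (\<Sum>b\<in>UNIV. \<Sum>l\<in>UNIV. \<bar>B $ b $ l\<bar>) * c / q)"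

context
  fixes A :: "real^'n^'n" and B :: "real^'p^'n" and C :: "real^'n^'m" and D :: "real^'p^'m"
    and c q :: real
  assumes q0: "0 < q" and q1: "q < 1" and dec: "\<And>j a b. \<bar>mpow A j $ a $ b\<bar> \<le> c * q^j"
begin

lemma transfer_series:
  fixes v :: "real^'m" and \<theta> :: real
  shows "(\<lambda>j. cis (-(real j * \<theta>)) * complex_of_real (rowv A B C D v j $ l)) sums
           (((\<chi> i. complex_of_real (v $ i)) v* transfer A B C D (cis \<theta>)) $ l)"
proof -
  define z where "z = cis \<theta>"
  define w where "w = cis (-\<theta>)"
  have zw: "z * w = 1" unfolding z_def w_def by (simp add: cis_mult)
  have nw: "cmod w = 1" unfolding w_def by simp
  have summ: "summable (\<lambda>j. w^(Suc j) * complex_of_real (mpow A j $ a $ b))" for a b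
  proof (rule summable_comparison_test')
    show "summable (\<lambda>j. c * q^j)" using q0 q1 by (intro summable_mult summable_geometric) simp
    fix j show "norm (w^(Suc j) * complex_of_real (mpow A j $ a $ b)) \<le> c * q^j"
      using dec[of j a b] by (simp add: norm_mult norm_power nw)
  qed
  define Nm where "Nm = (\<chi> a b. \<Sum>j. w^(Suc j) * complex_of_real (mpow A j $ a $ b))"
  have sN: "(\<lambda>j. w^(Suc j) * complex_of_real (mpow A j $ a $ b)) sums (Nm $ a $ b)" for a b
    unfolding Nm_def using summ[of a b] by (simp add: summable_sums)
  have inv: "(mat z - cmat A) ** Nm = mat 1"
  proof -
    have "((mat z - cmat A) ** Nm) $ a $ b = mat 1 $ a $ b" for a b
    proof -
      define s where "s = (\<lambda>j. w^j * complex_of_real (mpow A j $ a $ b))"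
      have s0: "s \<longlonglongrightarrow> 0"
      proof (rule Lim_null_comparison)
        show "\<forall>\<^sub>F j in sequentially. norm (s j) \<le> c * q^j"
          using dec by (simp add: s_def norm_mult norm_power nw)
        show "(\<lambda>j. c * q^j) \<longlonglongrightarrow> 0" using q0 q1 by (intro tendsto_mult_right_zero LIMSEQ_power_zero) simp_all
      qed
      have tel: "(\<lambda>j. s j - s (Suc j)) sums (s 0 - 0)" by (rule telescope_sums'[OF s0])
      have sd: "(\<lambda>j. z * (w^(Suc j) * complex_of_real (mpow A j $ a $ b)) -
                   (\<Sum>k\<in>UNIV. cmat A $ a $ k * (w^(Suc j) * complex_of_real (mpow A j $ k $ b))))
              sums (z * Nm $ a $ b - (\<Sum>k\<in>UNIV. cmat A $ a $ k * Nm $ k $ b))"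
        by (intro sums_diff sums_mult sums_sum sN)
      have eqt: "z * (w^(Suc j) * complex_of_real (mpow A j $ a $ b)) -
                   (\<Sum>k\<in>UNIV. cmat A $ a $ k * (w^(Suc j) * complex_of_real (mpow A j $ k $ b)))
               = s j - s (Suc j)" for j
      proof -
        have "z * (w^(Suc j) * complex_of_real (mpow A j $ a $ b)) = s j"
          unfolding s_def by (simp add: zw mult.assoc[symmetric])
        moreover have "(\<Sum>k\<in>UNIV. cmat A $ a $ k * (w^(Suc j) * complex_of_real (mpow A j $ k $ b)))
                = s (Suc j)"
          unfolding s_def cmat_def
          by (simp add: matrix_matrix_mult_def sum_distrib_left mult_ac)
        ultimately show ?thesis by simp
      qed
      have "z * Nm $ a $ b - (\<Sum>k\<in>UNIV. cmat A $ a $ k * Nm $ k $ b) = s 0"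
        using sums_unique2[OF sd[unfolded eqt] tel] by simp
      moreover have "((mat z - cmat A) ** Nm) $ a $ b = z * Nm $ a $ b - (\<Sum>k\<in>UNIV. cmat A $ a $ k * Nm $ k $ b)"
      proof -
        have "((mat z - cmat A) ** Nm) $ a $ b = (\<Sum>k\<in>UNIV. mat z $ a $ k * Nm $ k $ b) - (\<Sum>k\<in>UNIV. cmat A $ a $ k * Nm $ k $ b)"
          by (simp add: matrix_matrix_mult_def left_diff_distrib sum_subtractf)
        moreover have "(\<Sum>k\<in>UNIV. mat z $ a $ k * Nm $ k $ b) = (\<Sum>k\<in>UNIV. if k = a then z * Nm $ k $ b else 0)"
          by (rule sum.cong) (auto simp: Finite_Cartesian_Product.mat_def)
        moreover have "(\<Sum>k\<in>UNIV. if k = a then z * Nm $ k $ b else 0) = z * Nm $ a $ b"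
          by (simp add: sum.delta)
        ultimately show ?thesis by simp
      qed
      moreover have "s 0 = mat 1 $ a $ b" by (simp add: s_def Finite_Cartesian_Product.mat_def)
      ultimately show ?thesis by simp
    qed
    then show ?thesis by (simp add: Finite_Cartesian_Product.vec_eq_iff)
  qed
  have minv: "matrix_inv (mat z - cmat A) = Nm" by (rule matrix_inv_eq[OF inv])
  define vc where "vc = (\<chi> i. complex_of_real (v $ i))"
  have s1: "(\<lambda>j. \<Sum>i\<in>UNIV. \<Sum>b\<in>UNIV. \<Sum>a\<in>UNIV. vc $ i * cmat C $ i $ a *
              (w^(Suc j) * complex_of_real (mpow A j $ a $ b)) * cmat B $ b $ l)
           sums (\<Sum>i\<in>UNIV. \<Sum>b\<in>UNIV. \<Sum>a\<in>UNIV. vc $ i * cmat C $ i $ a * Nm $ a $ b * cmat B $ b $ l)"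
    by (intro sums_sum sums_mult sums_mult2 sN)
  have e1: "(\<Sum>i\<in>UNIV. \<Sum>b\<in>UNIV. \<Sum>a\<in>UNIV. vc $ i * cmat C $ i $ a *
              (w^(Suc j) * complex_of_real (mpow A j $ a $ b)) * cmat B $ b $ l)
        = cis (-(real (Suc j) * \<theta>)) * complex_of_real (rowv A B C D v (Suc j) $ l)" for j
  proof -
    have "w^(Suc j) = cis (real (Suc j) * (-\<theta>))" unfolding w_def by (rule Complex.DeMoivre)
    then have "cis (-(real (Suc j) * \<theta>)) = w^(Suc j)" by (simp only: mult_minus_right)
    then show ?thesis
      unfolding rowv_def blk_def vc_def cmat_def
      by (simp add: vector_matrix_mult_def matrix_matrix_mult_def sum_distrib_left sum_distrib_right mult_ac)
  qed
  have e2: "((\<chi> i. complex_of_real (v $ i)) v* transfer A B C D (cis \<theta>)) $ l =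
      (\<Sum>i\<in>UNIV. \<Sum>b\<in>UNIV. \<Sum>a\<in>UNIV. vc $ i * cmat C $ i $ a * Nm $ a $ b * cmat B $ b $ l)
       + cis (-(real 0 * \<theta>)) * complex_of_real (rowv A B C D v 0 $ l)"
    unfolding transfer_def minv[unfolded z_def] vc_def[symmetric]
    unfolding rowv_def blk_def
    by (simp add: vector_matrix_mult_def matrix_matrix_mult_def sum_distrib_left sum_distrib_right
        mult_ac sum.distrib vc_def cmat_def distrib_left)
  have "(\<lambda>j. cis (-(real (Suc j) * \<theta>)) * complex_of_real (rowv A B C D v (Suc j) $ l)) sums
       (\<Sum>i\<in>UNIV. \<Sum>b\<in>UNIV. \<Sum>a\<in>UNIV. vc $ i * cmat C $ i $ a * Nm $ a $ b * cmat B $ b $ l)"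
    using s1 e1 by simp
  then show ?thesis unfolding e2 by (subst sums_Suc_iff[symmetric]) simp
qed

lemma c0: "0 \<le> c"
  using dec[of 0 undefined undefined] by simp

lemma blk_bound: "\<bar>blk A B C D j $ i $ l\<bar> \<le> Kb A B C D c q * q^j"
proof (cases j)
  case 0
  then show ?thesis using entry_le_sum2[of D i l] by (simp add: blk_def Kb_def)
next
  case (Suc j')
  have "\<bar>(C ** mpow A j' ** B) $ i $ l\<bar> \<le> (\<Sum>i\<in>UNIV. \<Sum>a\<in>UNIV. \<bar>C $ i $ a\<bar>) * (\<Sum>b\<in>UNIV. \<Sum>l\<in>UNIV. \<bar>B $ b $ l\<bar>) * (c * q^j')"
    by (rule entry_prod3) (rule dec)
  also have "\<dots> = ((\<Sum>i\<in>UNIV. \<Sum>a\<in>UNIV. \<bar>C $ i $ a\<bar>) * (\<Sum>b\<in>UNIV. \<Sum>l\<in>UNIV. \<bar>B $ b $ l\<bar>) * c / q) * q^j"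
    using q0 Suc by (simp add: field_simps)
  also have "\<dots> \<le> Kb A B C D c q * q^j"
    using q0 by (intro mult_right_mono) (auto simp: Kb_def)
  finally show ?thesis using Suc by (simp add: blk_def)
qed

lemma row_bound:
  assumes "norm v \<le> 1"
  shows "norm (rowv A B C D v j) \<le> (real CARD('m) * real CARD('p) * Kb A B C D c q) * q^j"
  using vm_bound[OF blk_bound assms] unfolding rowv_def by (simp add: mult_ac)

lemma Kb0: "0 \<le> Kb A B C D c q"
  unfolding Kb_def by (rule order_trans[OF _ max.cobounded1]) (auto intro: sum_nonneg)

lemma g_bound:
  assumes "norm v \<le> 1"
  shows "(norm (rowv A B C D v j))^2 \<le> (real CARD('m) * real CARD('p) * Kb A B C D c q)^2 * (q^2)^j"
proof -
  have "(norm (rowv A B C D v j))^2 \<le> ((real CARD('m) * real CARD('p) * Kb A B C D c q) * q^j)^2"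
    by (rule power_mono[OF row_bound[OF assms]]) simp
  then show ?thesis by (simp add: power_mult_distrib power_mult[symmetric] mult.commute)
qed

lemma geo2: "(\<lambda>j. K * (q^2)^j) sums (K / (1 - q^2))"
proof -
  have "\<bar>q^2\<bar> < 1" using q0 q1 by (simp add: abs_square_less_1)
  then show ?thesis using sums_mult[OF geometric_sums, of "q^2" K] by (simp add: divide_simps)
qed

lemma g_summable:
  assumes "norm v \<le> 1"
  shows "summable (\<lambda>j. (norm (rowv A B C D v j))^2)"
  by (rule summable_comparison_test'[OF sums_summable[OF geo2]]) (use g_bound[OF assms] in simp)

lemma inner_Mk: "v \<bullet> Mk_apply A B C D k x = (\<Sum>j<k. rowv A B C D v j \<bullet> x j)"
  by (simp add: Mk_apply_eq inner_sum_right dot_lmul_matrix rowv_def)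

lemma Mk_le:
  assumes "(\<Sum>j<k. (norm (x j))^2) \<le> 1"
  shows "v \<bullet> Mk_apply A B C D k x \<le> sqrt (\<Sum>j<k. (norm (rowv A B C D v j))^2)"
proof -
  have "v \<bullet> Mk_apply A B C D k x \<le> (\<Sum>j<k. norm (rowv A B C D v j) * norm (x j))"
    unfolding inner_Mk by (intro sum_mono norm_cauchy_schwarz)
  also have "\<dots> = (\<Sum>j<k. \<bar>norm (rowv A B C D v j)\<bar> * \<bar>norm (x j)\<bar>)" by simp
  also have "\<dots> \<le> L2_set (\<lambda>j. norm (rowv A B C D v j)) {..<k} * L2_set (\<lambda>j. norm (x j)) {..<k}"
    by (rule L2_set_mult_ineq)
  also have "\<dots> \<le> L2_set (\<lambda>j. norm (rowv A B C D v j)) {..<k} * 1"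
  proof (rule mult_left_mono)
    show "L2_set (\<lambda>j. norm (x j)) {..<k} \<le> 1" using assms by (simp add: L2_set_def)
  qed (rule L2_set_nonneg)
  finally show ?thesis by (simp add: L2_set_def)
qed

lemma Mk_ge:
  assumes v: "norm v = 1"
  shows "\<exists>x. (\<Sum>j<k. (norm (x j))^2) \<le> 1 \<and>
           sqrt (\<Sum>j<k. (norm (rowv A B C D v j))^2) \<le> norm (Mk_apply A B C D k x)"
proof -
  define s where "s = (\<Sum>j<k. (norm (rowv A B C D v j))^2)"
  have s0: "0 \<le> s" unfolding s_def by (intro sum_nonneg) simp
  show ?thesis
  proof (cases "s = 0")
    case True
    show ?thesis by (rule exI[of _ "\<lambda>_. 0"]) (simp add: True s_def[symmetric])
  next
    case False
    with s0 have sp: "0 < s" by simp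
    define x where "x = (\<lambda>j. (1 / sqrt s) *\<^sub>R rowv A B C D v j)"
    have xj: "(norm (x j))^2 = (1 / sqrt s)^2 * (norm (rowv A B C D v j))^2" for j
      unfolding x_def by (simp only: norm_scaleR power_mult_distrib power2_abs)
    have "(\<Sum>j<k. (norm (x j))^2) = (1 / sqrt s)^2 * s"
      unfolding xj s_def by (simp add: sum_distrib_left)
    also have "\<dots> = 1" using sp by (simp add: power_divide)
    finally have x1: "(\<Sum>j<k. (norm (x j))^2) = 1" .
    have "v \<bullet> Mk_apply A B C D k x = (1 / sqrt s) * s"
      unfolding inner_Mk x_def s_def by (simp add: sum_distrib_left power2_norm_eq_inner)
    also have "\<dots> = sqrt s" using sp by (simp add: field_simps)
    finally have "sqrt s = v \<bullet> Mk_apply A B C D k x" by simp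
    also have "\<dots> \<le> norm v * norm (Mk_apply A B C D k x)" by (rule norm_cauchy_schwarz)
    finally show ?thesis using x1 v by (intro exI[of _ x]) (simp add: s_def)
  qed
qed

lemma H2_integral:
  assumes v: "norm v = 1"
  shows "1 / (2 * pi) * integral {0..2 * pi}
          (\<lambda>\<theta>. (norm ((\<chi> i. complex_of_real (v $ i)) v* transfer A B C D (cis \<theta>)))\<^sup>2)
       = (\<Sum>j. (norm (rowv A B C D v j))^2)"
proof -
  define NK where "NK = real CARD('m) * real CARD('p) * Kb A B C D c q"
  have v1: "norm v \<le> 1" using v by simp
  have cb: "\<bar>rowv A B C D v j $ l\<bar> \<le> NK * q^j" for j l
    using component_le_norm_cart[of "rowv A B C D v j" l] row_bound[OF v1, of j] unfolding NK_def by linarith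
  have pl: "((\<lambda>\<theta>. (cmod (((\<chi> i. complex_of_real (v $ i)) v* transfer A B C D (cis \<theta>)) $ l))^2)
            has_integral (2 * pi * (\<Sum>j. (rowv A B C D v j $ l)^2))) {0..2*pi}" for l
    by (rule parseval[OF less_imp_le[OF q0] q1 cb transfer_series])
  have hs: "((\<lambda>\<theta>. \<Sum>l\<in>UNIV. (cmod (((\<chi> i. complex_of_real (v $ i)) v* transfer A B C D (cis \<theta>)) $ l))^2)
            has_integral (\<Sum>l\<in>UNIV. 2 * pi * (\<Sum>j. (rowv A B C D v j $ l)^2))) {0..2*pi}"
    by (rule has_integral_sum) (auto intro: pl)
  have summ_l: "summable (\<lambda>j. (rowv A B C D v j $ l)^2)" for l
  proof (rule summable_comparison_test'[OF g_summable[OF v1]])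
    fix j
    have "\<bar>rowv A B C D v j $ l\<bar> \<le> norm (rowv A B C D v j)" by (rule component_le_norm_cart)
    then have "\<bar>rowv A B C D v j $ l\<bar>^2 \<le> (norm (rowv A B C D v j))^2" by (intro power_mono) auto
    then show "norm ((rowv A B C D v j $ l)^2) \<le> (norm (rowv A B C D v j))^2" by simp
  qed
  have "(\<Sum>l\<in>UNIV. 2 * pi * (\<Sum>j. (rowv A B C D v j $ l)^2)) = 2 * pi * (\<Sum>j. \<Sum>l\<in>UNIV. (rowv A B C D v j $ l)^2)"
    by (simp add: sum_distrib_left suminf_sum[OF summ_l])
  also have "(\<lambda>j. \<Sum>l\<in>UNIV. (rowv A B C D v j $ l)^2) = (\<lambda>j. (norm (rowv A B C D v j))^2)"
    by (simp add: norm_sq_vec)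
  finally have eq: "(\<Sum>l\<in>UNIV. 2 * pi * (\<Sum>j. (rowv A B C D v j $ l)^2)) = 2 * pi * (\<Sum>j. (norm (rowv A B C D v j))^2)" .
  have "integral {0..2 * pi} (\<lambda>\<theta>. (norm ((\<chi> i. complex_of_real (v $ i)) v* transfer A B C D (cis \<theta>)))\<^sup>2)
      = 2 * pi * (\<Sum>j. (norm (rowv A B C D v j))^2)"
    using integral_unique[OF hs] eq by (simp add: norm_sq_vec)
  then show ?thesis by simp
qed

lemma main_limit: "(\<lambda>k. Mk_opnorm A B C D k) \<longlonglongrightarrow> H2op_norm A B C D"
proof -
  define NK2 where "NK2 = (real CARD('m) * real CARD('p) * Kb A B C D c q)^2"
  define Sf where "Sf = (\<lambda>v. \<Sum>j. (norm (rowv A B C D v j))^2)"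
  define Sph where "Sph = {v::real^'m. norm v = 1}"
  define H where "H = (SUP v\<in>Sph. sqrt (Sf v))"
  define X where "X = (\<lambda>k. {x :: nat \<Rightarrow> real^'p. (\<Sum>j<k. (norm (x j))^2) \<le> 1})"
  define eps where "eps = (\<lambda>k. sqrt (NK2 * (q^2)^k / (1 - q^2)))"
  have q21: "q^2 < 1" using q0 q1 by (simp add: power_less_one_iff abs_square_less_1)
  have H2: "H2op_norm A B C D = H"
    unfolding H2op_norm_def H_def Sph_def Sf_def
  proof (rule SUP_cong)
    fix v :: "real^'m" assume "v \<in> {v. norm v = 1}"
    then have "norm v = 1" by simp
    from H2_integral[OF this] show "sqrt (1 / (2 * pi) * integral {0..2 * pi}
          (\<lambda>\<theta>. (norm ((\<chi> i. complex_of_real (v $ i)) v* transfer A B C D (cis \<theta>)))\<^sup>2)) =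
        sqrt (\<Sum>j. (norm (rowv A B C D v j))^2)" by simp
  qed simp
  have Sk_le: "(\<Sum>j<k. (norm (rowv A B C D v j))^2) \<le> Sf v" if "norm v \<le> 1" for v k
    unfolding Sf_def by (rule sum_le_suminf[OF g_summable[OF that]]) auto
  have Sf_le: "Sf v \<le> NK2 / (1 - q^2)" if "norm v \<le> 1" for v
  proof -
    have "Sf v \<le> (\<Sum>j. NK2 * (q^2)^j)"
      unfolding Sf_def NK2_def by (rule suminf_le[OF g_bound[OF that] g_summable[OF that] sums_summable[OF geo2]])
    then show ?thesis using sums_unique[OF geo2, of NK2] by simp
  qed
  have tail: "Sf v - (\<Sum>j<k. (norm (rowv A B C D v j))^2) \<le> NK2 * (q^2)^k / (1 - q^2)" if "norm v \<le> 1" for v k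
  proof -
    have "Sf v - (\<Sum>j<k. (norm (rowv A B C D v j))^2) = (\<Sum>j. (norm (rowv A B C D v (j + k)))^2)"
      unfolding Sf_def using suminf_split_initial_segment[OF g_summable[OF that], of k] by simp
    also have "\<dots> \<le> (\<Sum>j. (q^2)^k * (NK2 * (q^2)^j))"
    proof (rule suminf_le)
      show "summable (\<lambda>j. (norm (rowv A B C D v (j + k)))^2)"
        using g_summable[OF that] by (rule summable_ignore_initial_segment)
      show "summable (\<lambda>j. (q^2)^k * (NK2 * (q^2)^j))" by (intro summable_mult sums_summable[OF geo2])
      fix j show "(norm (rowv A B C D v (j + k)))^2 \<le> (q^2)^k * (NK2 * (q^2)^j)"
        using g_bound[OF that, of "j + k"] unfolding NK2_def by (simp add: power_add mult_ac)
    qed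
    also have "\<dots> = (q^2)^k * (NK2 / (1 - q^2))"
      using sums_unique[OF sums_mult[OF geo2[of NK2], of "(q^2)^k"]] by simp
    finally have "Sf v - (\<Sum>j<k. (norm (rowv A B C D v j))^2) \<le> (q^2)^k * (NK2 / (1 - q^2))" .
    then show ?thesis by (simp add: mult.commute)
  qed
  obtain e :: "real^'m" where e: "e \<in> Sph" unfolding Sph_def using norm_axis_1 by blast
  have bddH: "bdd_above ((\<lambda>v. sqrt (Sf v)) ` Sph)"
    by (rule bdd_aboveI[where M="sqrt (NK2 / (1 - q^2))"]) (auto simp: Sph_def intro!: Sf_le)
  have Hv: "sqrt (Sf v) \<le> H" if "v \<in> Sph" for v
    unfolding H_def by (rule cSUP_upper[OF that bddH])
  have "0 \<le> Sf e" unfolding Sf_def using e by (intro suminf_nonneg g_summable) (auto simp: Sph_def)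
  then have H0: "0 \<le> H" using Hv[OF e] by (meson real_sqrt_ge_zero order_trans)
  have normMk: "norm (Mk_apply A B C D k x) \<le> H" if "x \<in> X k" for x k
  proof (cases "Mk_apply A B C D k x = 0")
    case True then show ?thesis using H0 by simp
  next
    case False
    define y where "y = Mk_apply A B C D k x"
    define v where "v = (1 / norm y) *\<^sub>R y"
    have v1: "norm v = 1" using False unfolding v_def y_def by simp
    have "norm y = v \<bullet> y" using False unfolding v_def y_def
      by (simp add: power2_norm_eq_inner[symmetric] power2_eq_square)
    also have "\<dots> \<le> sqrt (\<Sum>j<k. (norm (rowv A B C D v j))^2)"
      unfolding y_def by (rule Mk_le) (use that in \<open>simp add: X_def\<close>)
    also have "\<dots> \<le> sqrt (Sf v)" using Sk_le[of v k] v1 by simp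
    also have "\<dots> \<le> H" using Hv v1 by (simp add: Sph_def)
    finally show ?thesis unfolding y_def .
  qed
  have X0: "(\<lambda>_. 0) \<in> X k" for k by (simp add: X_def)
  have bddF: "bdd_above ((\<lambda>x. norm (Mk_apply A B C D k x)) ` X k)" for k
    by (rule bdd_aboveI[where M=H]) (auto intro: normMk)
  have F_eq: "Mk_opnorm A B C D k = (SUP x\<in>X k. norm (Mk_apply A B C D k x))" for k
    unfolding Mk_opnorm_def X_def ..
  have Fle: "Mk_opnorm A B C D k \<le> H" for k
    unfolding F_eq using X0 by (intro cSUP_least normMk) auto
  have Fge: "H - eps k \<le> Mk_opnorm A B C D k" for k
  proof -
    have "H \<le> Mk_opnorm A B C D k + eps k"
      unfolding H_def
    proof (rule cSUP_least)
      show "Sph \<noteq> {}" using e by auto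
      fix v assume "v \<in> Sph"
      then have v1: "norm v = 1" by (simp add: Sph_def)
      define sk where "sk = (\<Sum>j<k. (norm (rowv A B C D v j))^2)"
      obtain x where x: "(\<Sum>j<k. (norm (x j))^2) \<le> 1" "sqrt sk \<le> norm (Mk_apply A B C D k x)"
        using Mk_ge[OF v1, of k] unfolding sk_def by blast
      have sk0: "0 \<le> sk" unfolding sk_def by (intro sum_nonneg) simp
      have "sqrt (Sf v) = sqrt (sk + (Sf v - sk))" by simp
      also have "\<dots> \<le> sqrt sk + sqrt (Sf v - sk)"
        using sk0 Sk_le[of v k] v1 unfolding sk_def by (intro sqrt_add_le_add_sqrt) auto
      also have "\<dots> \<le> norm (Mk_apply A B C D k x) + eps k"
        using x(2) tail[of v k] v1 unfolding eps_def sk_def by (intro add_mono real_sqrt_le_mono) auto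
      also have "norm (Mk_apply A B C D k x) \<le> Mk_opnorm A B C D k"
        unfolding F_eq using x(1) by (intro cSUP_upper bddF) (simp add: X_def)
      finally show "sqrt (Sf v) \<le> Mk_opnorm A B C D k + eps k" by simp
    qed
    then show ?thesis by simp
  qed
  have eps0: "eps \<longlonglongrightarrow> 0"
  proof -
    have "(\<lambda>k. sqrt (NK2 * (q^2)^k / (1 - q^2))) \<longlonglongrightarrow> sqrt (NK2 * 0 / (1 - q^2))"
      using q0 q21 by (intro tendsto_intros LIMSEQ_power_zero) auto
    then show ?thesis unfolding eps_def by simp
  qed
  have "(\<lambda>k. Mk_opnorm A B C D k) \<longlonglongrightarrow> H"
  proof (rule tendsto_sandwich[where f="\<lambda>k. H - eps k" and h="\<lambda>k. H"])
    show "\<forall>\<^sub>F k in sequentially. H - eps k \<le> Mk_opnorm A B C D k" using Fge by simp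
    show "\<forall>\<^sub>F k in sequentially. Mk_opnorm A B C D k \<le> H" using Fle by simp
    show "(\<lambda>k. H - eps k) \<longlonglongrightarrow> H" using tendsto_diff[OF tendsto_const eps0] by simp
  qed simp
  then show ?thesis using H2 by simp
qed

end


theorem lemma18:
  fixes A :: "real^'n^'n" and B :: "real^'p^'n" and C :: "real^'n^'m" and D :: "real^'p^'m"
  assumes "spectral_radius A < 1"
  shows "(\<lambda>k. Mk_opnorm A B C D k) \<longlonglongrightarrow> H2op_norm A B C D"
proof -
  obtain c q where q: "0 < q" "q < 1" and dec: "\<And>j a b. \<bar>mpow A j $ a $ b\<bar> \<le> c * q^j"
    using decay[OF assms] by blast
  show ?thesis by (rule main_limit[OF q dec])
qed

end
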